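(* If a non-linear regularizing filter $(\varphi_\alpha)_{\alpha>0}$ satisfies Assumption A with constants $b,c>0$ (as in (A2)), then it satisfies Assumption B with $d=bc$ and $e=1/(2\sqrt b)$.
   Context: A non-linear regularizing filter is a family $(\varphi_\alpha)_{\alpha>0}$ of functions $\varphi_\alpha\colon(0,\infty)\times\mathbb{R}\to\mathbb{R}$ such that for all $\alpha,\kappa>0$: (F1) $\varphi_\alpha(\kappa,\cdot)$ is non-decreasing; (F2) $\varphi_\alpha(\kappa,\cdot)$ is 1-Lipschitz; (F3) $\varphi_\alpha(\kappa,0)=0$; (F4) $\lim_{\alpha\to0}\varphi_\alpha(\kappa,c)=c$ for all $c\in\mathbb{R}$. Assumption A: (A1) for all $\kappa>0$ and $y\in\mathbb{R}$, the set $\{(w-y)/\alpha:\varphi_\alpha(\kappa,w)=y\}$ does not depend on $\alpha>0$; (A2) for some $\tilde\alpha>0$ there exist $b,c>0$ such that for all $\kappa>0$ and $x\in\mathbb{R}$: $|x|\le\min\big(\varphi_{\tilde\alpha}(\kappa,\cdot)^{-1}(c\kappa)\big)\Rightarrow|\varphi_{\tilde\alpha}(\kappa,x)|\le\frac{\kappa^2}{\kappa^2+\tilde\alpha b}|x|$ (min denotes the smallest element of the preimage interval). Assumption B: (B1) for all $\kappa>0$ and $x\in\mathbb{R}$, the family $(|\varphi_\alpha(\kappa,x)|)_{\alpha>0}$ is monotonically increasing as $\alpha\downarrow0$ (i.e. $\alpha<\alpha'$ implies $|\varphi_\alpha(\kappa,x)|\ge|\varphi_{\alpha'}(\kappa,x)|$);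 (B2) there exist $d,e>0$ such that for all $\kappa>0$, $\alpha>0$, $x\in\mathbb{R}$: $|x|\le d\alpha/\kappa\Rightarrow|\varphi_\alpha(\kappa,x)|\le\frac{e\kappa}{\sqrt\alpha}|x|$. *)

theory Defs
  imports "HOL-Analysis.Analysis"
begin

text \<open>A family of filters is encoded as phi :: real => real => real => real,
  where phi alpha kappa x stands for phi_alpha(kappa, x); only alpha > 0 and kappa > 0 matter.\<close>

definition nl_reg_filter :: "(real \<Rightarrow> real \<Rightarrow> real \<Rightarrow> real) \<Rightarrow> bool" where
  "nl_reg_filter phi \<longleftrightarrow>
     (\<forall>\<alpha>>0. \<forall>\<kappa>>0.
        mono (phi \<alpha> \<kappa>) \<and>
        (\<forall>x y. \<bar>phi \<alpha> \<kappa> x - phi \<alpha> \<kappa> y\<bar> \<le> \<bar>x - y\<bar>) \<and>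
        phi \<alpha> \<kappa> 0 = 0) \<and>
     (\<forall>\<kappa>>0. \<forall>c. ((\<lambda>\<alpha>. phi \<alpha> \<kappa> c) \<longlongrightarrow> c) (at_right 0))"

definition preimage_min :: "(real \<Rightarrow> real \<Rightarrow> real \<Rightarrow> real) \<Rightarrow> real \<Rightarrow> real \<Rightarrow> real \<Rightarrow> real" where
  "preimage_min phi \<alpha> \<kappa> y = Inf {w. phi \<alpha> \<kappa> w = y}"

definition assumption_A1 :: "(real \<Rightarrow> real \<Rightarrow> real \<Rightarrow> real) \<Rightarrow> bool" where
  "assumption_A1 phi \<longleftrightarrow>
     (\<forall>\<kappa>>0. \<forall>y. \<forall>\<alpha>>0. \<forall>\<alpha>'>0.
        {(w - y) / \<alpha> | w. phi \<alpha> \<kappa> w = y} = {(w - y) / \<alpha>' | w. phi \<alpha>' \<kappa> w = y})"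

definition assumption_A2 :: "(real \<Rightarrow> real \<Rightarrow> real \<Rightarrow> real) \<Rightarrow> real \<Rightarrow> real \<Rightarrow> real \<Rightarrow> bool" where
  "assumption_A2 phi \<alpha>t b c \<longleftrightarrow>
     (\<forall>\<kappa>>0. \<forall>x. \<bar>x\<bar> \<le> preimage_min phi \<alpha>t \<kappa> (c * \<kappa>) \<longrightarrow>
        \<bar>phi \<alpha>t \<kappa> x\<bar> \<le> \<kappa>\<^sup>2 / (\<kappa>\<^sup>2 + \<alpha>t * b) * \<bar>x\<bar>)"

definition assumption_B1 :: "(real \<Rightarrow> real \<Rightarrow> real \<Rightarrow> real) \<Rightarrow> bool" where
  "assumption_B1 phi \<longleftrightarrow>
     (\<forall>\<kappa>>0. \<forall>x. \<forall>\<alpha>>0. \<forall>\<alpha>'>0. \<alpha> < \<alpha>' \<longrightarrow> \<bar>phi \<alpha> \<kappa> x\<bar> \<ge> \<bar>phi \<alpha>' \<kappa> x\<bar>)"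

definition assumption_B2 :: "(real \<Rightarrow> real \<Rightarrow> real \<Rightarrow> real) \<Rightarrow> real \<Rightarrow> real \<Rightarrow> bool" where
  "assumption_B2 phi d e \<longleftrightarrow>
     (\<forall>\<kappa>>0. \<forall>\<alpha>>0. \<forall>x. \<bar>x\<bar> \<le> d * \<alpha> / \<kappa> \<longrightarrow>
        \<bar>phi \<alpha> \<kappa> x\<bar> \<le> e * \<kappa> / sqrt \<alpha> * \<bar>x\<bar>)"

end

theory Submission
  imports Defs
begin

lemma basic:
  assumes "nl_reg_filter phi" "\<alpha> > 0" "\<kappa> > 0"
  shows "mono (phi \<alpha> \<kappa>)" "\<And>x y. \<bar>phi \<alpha> \<kappa> x - phi \<alpha> \<kappa> y\<bar> \<le> \<bar>x - y\<bar>"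
    "phi \<alpha> \<kappa> 0 = 0"
  using assms unfolding nl_reg_filter_def by auto

lemma pos_bound:
  assumes "nl_reg_filter phi" "\<alpha> > 0" "\<kappa> > 0" "x \<ge> 0"
  shows "0 \<le> phi \<alpha> \<kappa> x \<and> phi \<alpha> \<kappa> x \<le> x"
proof -
  note b = basic[OF assms(1-3)]
  have "phi \<alpha> \<kappa> 0 \<le> phi \<alpha> \<kappa> x" using b(1) assms(4) by (simp add: monoD)
  moreover have "\<bar>phi \<alpha> \<kappa> x - phi \<alpha> \<kappa> 0\<bar> \<le> \<bar>x - 0\<bar>" by (rule b(2))
  ultimately show ?thesis using b(3) assms(4) by auto
qed

lemma neg_bound:
  assumes "nl_reg_filter phi" "\<alpha> > 0" "\<kappa> > 0" "x \<le> 0"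
  shows "x \<le> phi \<alpha> \<kappa> x \<and> phi \<alpha> \<kappa> x \<le> 0"
proof -
  note b = basic[OF assms(1-3)]
  have "phi \<alpha> \<kappa> x \<le> phi \<alpha> \<kappa> 0" using b(1) assms(4) by (simp add: monoD)
  moreover have "\<bar>phi \<alpha> \<kappa> x - phi \<alpha> \<kappa> 0\<bar> \<le> \<bar>x - 0\<bar>" by (rule b(2))
  ultimately show ?thesis using b(3) assms(4) by auto
qed

lemma cont:
  assumes "nl_reg_filter phi" "\<alpha> > 0" "\<kappa> > 0"
  shows "continuous_on UNIV (phi \<alpha> \<kappa>)"
proof -
  have "1-lipschitz_on UNIV (phi \<alpha> \<kappa>)"
    using basic(2)[OF assms] by (intro lipschitz_onI) (auto simp: dist_real_def)
  then show ?thesis by (rule lipschitz_on_continuous_on)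
qed

lemma transfer:
  assumes "assumption_A1 phi" "\<kappa> > 0" "\<beta> > 0" "\<beta>' > 0" "phi \<beta> \<kappa> w = y"
  shows "phi \<beta>' \<kappa> (y + \<beta>' * ((w - y) / \<beta>)) = y"
proof -
  have eq: "{(w - y) / \<beta> | w. phi \<beta> \<kappa> w = y} = {(w - y) / \<beta>' | w. phi \<beta>' \<kappa> w = y}"
    using assms(1-4) unfolding assumption_A1_def by blast
  have "(w - y) / \<beta> \<in> {(w - y) / \<beta> | w. phi \<beta> \<kappa> w = y}" using assms(5) by blast
  then have "(w - y) / \<beta> \<in> {(w - y) / \<beta>' | w. phi \<beta>' \<kappa> w = y}" using eq by simp
  then obtain w' where w': "(w - y) / \<beta> = (w' - y) / \<beta>'" "phi \<beta>' \<kappa> w' = y" by blast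
  have "y + \<beta>' * ((w - y) / \<beta>) = w'" using w'(1) assms(4) by (simp add: field_simps)
  then show ?thesis using w'(2) by simp
qed

lemma S_mono:
  assumes "nl_reg_filter phi" "assumption_A1 phi" "\<kappa> > 0" "\<beta> > 0"
    "phi \<beta> \<kappa> (y + \<beta> * s) = y" "phi \<beta> \<kappa> (y' + \<beta> * s') = y'" "y < y'"
  shows "s \<le> s'"
proof (rule ccontr)
  assume "\<not> s \<le> s'"
  then have ss: "s > s'" by simp
  define a where "a = (y' - y) / (s - s') + 1"
  have a0: "a > 0" using ss assms(7) by (simp add: a_def add_pos_nonneg)
  have 1: "phi a \<kappa> (y + a * s) = y"
    using transfer[OF assms(2,3,4) a0 assms(5)] assms(4) by simp
  have 2: "phi a \<kappa> (y' + a * s') = y'"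
    using transfer[OF assms(2,3,4) a0 assms(6)] assms(4) by simp
  have "a * (s - s') = (y' - y) + (s - s')" using ss by (simp add: a_def field_simps)
  then have "y' + a * s' \<le> y + a * s" using ss by (simp add: algebra_simps)
  then have "phi a \<kappa> (y' + a * s') \<le> phi a \<kappa> (y + a * s)"
    using basic(1)[OF assms(1) a0 assms(3)] by (simp add: monoD)
  then show False using 1 2 assms(7) by simp
qed

lemma nonempty:
  assumes "nl_reg_filter phi" "assumption_A1 phi" "\<kappa> > 0" "\<beta> > 0" "vv > 0"
  shows "\<exists>w. phi \<beta> \<kappa> w = vv"
proof -
  have "filterlim (\<lambda>\<alpha>. phi \<alpha> \<kappa> (2 * vv)) (nhds (2 * vv)) (at_right 0)"
    using assms(1,3) unfolding nl_reg_filter_def by blast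
  then have "\<forall>\<^sub>F \<alpha> in at_right 0. dist (phi \<alpha> \<kappa> (2 * vv)) (2 * vv) < vv"
    using assms(5) by (simp add: tendsto_iff)
  moreover have "\<forall>\<^sub>F \<alpha> in at_right (0::real). \<alpha> > 0" by (simp add: eventually_at_right_less)
  ultimately have ev: "\<forall>\<^sub>F \<alpha> in at_right (0::real). \<alpha> > 0 \<and> dist (phi \<alpha> \<kappa> (2 * vv)) (2 * vv) < vv"
    by (rule eventually_conj[rotated])
  have nb: "at_right (0::real) \<noteq> bot" by simp
  from eventually_happens'[OF nb ev]
  obtain a where a: "a > 0" "dist (phi a \<kappa> (2 * vv)) (2 * vv) < vv"
    by blast
  have "phi a \<kappa> 0 \<le> vv" using basic(3)[OF assms(1) a(1) assms(3)] assms(5) by simp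
  moreover have "vv \<le> phi a \<kappa> (2 * vv)" using a(2) by (simp add: dist_real_def)
  moreover have "\<forall>x. 0 \<le> x \<and> x \<le> 2 * vv \<longrightarrow> isCont (phi a \<kappa>) x"
    using cont[OF assms(1) a(1) assms(3)] by (simp add: continuous_on_eq_continuous_at)
  ultimately obtain w where "phi a \<kappa> w = vv"
    using IVT[of "phi a \<kappa>" 0 vv "2 * vv"] assms(5) by auto
  from transfer[OF assms(2,3) a(1) assms(4) this] show ?thesis by blast
qed


lemma alg:
  fixes \<kappa> \<alpha> \<alpha>t b Y \<sigma> :: real
  assumes "\<kappa> > 0" "\<alpha> > 0" "\<alpha>t > 0" "b > 0" "Y \<ge> 0" "\<sigma> \<ge> 0"
    "Y \<le> \<kappa>\<^sup>2 / (\<kappa>\<^sup>2 + \<alpha>t * b) * (Y + \<alpha>t * \<sigma>)"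
  shows "Y \<le> 1 / (2 * sqrt b) * \<kappa> / sqrt \<alpha> * (Y + \<alpha> * \<sigma>)"
proof -
  have d: "\<kappa>\<^sup>2 + \<alpha>t * b > 0" using assms by (simp add: add_pos_pos)
  have "Y * (\<kappa>\<^sup>2 + \<alpha>t * b) \<le> \<kappa>\<^sup>2 * (Y + \<alpha>t * \<sigma>)"
    using assms(7) d by (simp add: field_simps)
  then have "\<alpha>t * (Y * b) \<le> \<alpha>t * (\<kappa>\<^sup>2 * \<sigma>)" by (simp add: algebra_simps)
  then have h: "Y * b \<le> \<kappa>\<^sup>2 * \<sigma>" using assms(3) by simp
  define r where "r = sqrt (b * \<alpha>)"
  have r0: "r > 0" using assms by (simp add: r_def)
  have r2: "r\<^sup>2 = b * \<alpha>" using assms by (simp add: r_def)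
  have sq: "sqrt b * sqrt \<alpha> = r" by (simp add: r_def real_sqrt_mult)
  have "2 * \<kappa> * r \<le> \<kappa>\<^sup>2 + r\<^sup>2" using sum_squares_bound[of \<kappa> r] by (simp add: power2_eq_square algebra_simps)
  then have "Y * (2 * \<kappa> * r) \<le> Y * (\<kappa>\<^sup>2 + r\<^sup>2)" using assms(5) by (rule mult_left_mono)
  also have "\<dots> = Y * \<kappa>\<^sup>2 + \<alpha> * (Y * b)" using r2 by (simp add: algebra_simps)
  also have "\<dots> \<le> Y * \<kappa>\<^sup>2 + \<alpha> * (\<kappa>\<^sup>2 * \<sigma>)" using h assms(2) by simp
  also have "\<dots> = \<kappa> * (\<kappa> * (Y + \<alpha> * \<sigma>))" by (simp add: power2_eq_square algebra_simps)
  finally have "\<kappa> * (2 * r * Y) \<le> \<kappa> * (\<kappa> * (Y + \<alpha> * \<sigma>))" by (simp add: algebra_simps)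
  then have "2 * r * Y \<le> \<kappa> * (Y + \<alpha> * \<sigma>)" using assms(1) by simp
  then have fin: "Y \<le> \<kappa> * (Y + \<alpha> * \<sigma>) / (2 * r)" using r0 by (simp add: pos_le_divide_eq mult.commute)
  have eq: "1 / (2 * sqrt b) * \<kappa> / sqrt \<alpha> * (Y + \<alpha> * \<sigma>) = \<kappa> * (Y + \<alpha> * \<sigma>) / (2 * r)"
    unfolding sq[symmetric] by simp
  show ?thesis unfolding eq by (rule fin)
qed

lemma B1:
  assumes "nl_reg_filter phi" "assumption_A1 phi"
  shows "assumption_B1 phi"
  unfolding assumption_B1_def
proof (intro allI impI)
  fix \<kappa> x \<alpha> \<alpha>' :: real
  assume k: "\<kappa> > 0" and a: "\<alpha> > 0" and a': "\<alpha>' > 0" and lt: "\<alpha> < \<alpha>'"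
  define y where "y = phi \<alpha>' \<kappa> x"
  define w where "w = y + \<alpha> * ((x - y) / \<alpha>')"
  have pw: "phi \<alpha> \<kappa> w = y" unfolding w_def
    using transfer[OF assms(2) k a' a, of x y] y_def by simp
  have fr: "\<alpha> / \<alpha>' \<le> 1" using a a' lt by simp
  show "\<bar>phi \<alpha>' \<kappa> x\<bar> \<le> \<bar>phi \<alpha> \<kappa> x\<bar>"
  proof (cases "x \<ge> 0")
    case True
    have y: "0 \<le> y" "y \<le> x" using pos_bound[OF assms(1) a' k True] y_def by auto
    have "(\<alpha> / \<alpha>') * (x - y) \<le> 1 * (x - y)" using fr y by (intro mult_right_mono) auto
    then have "w \<le> x" unfolding w_def by (simp add: field_simps)
    then have "phi \<alpha> \<kappa> w \<le> phi \<alpha> \<kappa> x" using basic(1)[OF assms(1) a k] by (simp add: monoD)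
    then show ?thesis using pw y y_def by simp
  next
    case False
    have y: "y \<le> 0" "x \<le> y" using neg_bound[OF assms(1) a' k] False y_def by auto
    have "(\<alpha> / \<alpha>') * (y - x) \<le> 1 * (y - x)" using fr y by (intro mult_right_mono) auto
    moreover have "\<alpha> * ((x - y) / \<alpha>') = - ((\<alpha> / \<alpha>') * (y - x))" using a' by (simp add: field_simps)
    then have "w = y - (\<alpha> / \<alpha>') * (y - x)" unfolding w_def by simp
    ultimately have "x \<le> w" by simp
    then have "phi \<alpha> \<kappa> x \<le> phi \<alpha> \<kappa> w" using basic(1)[OF assms(1) a k] by (simp add: monoD)
    then show ?thesis using pw y y_def by simp
  qed
qed


lemma B2:
  fixes phi :: "real \<Rightarrow> real \<Rightarrow> real \<Rightarrow> real" and \<alpha>t b c :: real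
  assumes nl: "nl_reg_filter phi"
    and A1: "assumption_A1 phi"
    and at: "\<alpha>t > 0" and b: "b > 0" and c: "c > 0"
    and A2: "assumption_A2 phi \<alpha>t b c"
  shows "assumption_B2 phi (b * c) (1 / (2 * sqrt b))"
  unfolding assumption_B2_def
proof (intro allI impI)
  fix \<kappa> \<alpha> x :: real
  assume k: "\<kappa> > 0" and a: "\<alpha> > 0" and hx: "\<bar>x\<bar> \<le> b * c * \<alpha> / \<kappa>"
  define y where "y = phi \<alpha> \<kappa> x"
  define s where "s = (x - y) / \<alpha>"
  define wt where "wt = y + \<alpha>t * s"
  have xys: "x = y + \<alpha> * s" using a by (simp add: s_def)
  have pwt: "phi \<alpha>t \<kappa> wt = y" unfolding wt_def s_def
    using transfer[OF A1 k a at, of x y] y_def by simp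
  define P where "P = {w. phi \<alpha>t \<kappa> w = c * \<kappa>}"
  define m where "m = Inf P"
  have ck: "c * \<kappa> > 0" using c k by simp
  have Pne: "P \<noteq> {}" using nonempty[OF nl A1 k at ck] by (auto simp: P_def)
  have Pbdd: "bdd_below P"
  proof (rule bdd_belowI)
    fix w assume "w \<in> P"
    then have pw: "phi \<alpha>t \<kappa> w = c * \<kappa>" by (simp add: P_def)
    show "0 \<le> w"
    proof (rule ccontr)
      assume "\<not> 0 \<le> w"
      then have "phi \<alpha>t \<kappa> w \<le> 0" using neg_bound[OF nl at k, of w] by simp
      then show False using pw ck by simp
    qed
  qed
  have Pcl: "closed P" unfolding P_def
    by (rule closed_Collect_eq[OF cont[OF nl at k]]) simp
  have mP: "m \<in> P" unfolding m_def using closed_contains_Inf[OF Pne Pbdd Pcl] .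
  then have pm: "phi \<alpha>t \<kappa> m = c * \<kappa>" by (simp add: P_def)
  have m0: "m \<ge> 0"
  proof (rule ccontr)
    assume "\<not> 0 \<le> m"
    then have "phi \<alpha>t \<kappa> m \<le> 0" using neg_bound[OF nl at k, of m] by simp
    then show False using pm ck by simp
  qed
  define qt where "qt = \<kappa>\<^sup>2 / (\<kappa>\<^sup>2 + \<alpha>t * b)"
  have dpos: "\<kappa>\<^sup>2 + \<alpha>t * b > 0" using k at b by (simp add: add_pos_pos)
  have A2': "\<And>z. \<bar>z\<bar> \<le> m \<Longrightarrow> \<bar>phi \<alpha>t \<kappa> z\<bar> \<le> qt * \<bar>z\<bar>"
    using A2 k unfolding assumption_A2_def preimage_min_def qt_def m_def P_def by blast
  have "c * \<kappa> \<le> qt * m" using A2'[of m] m0 pm ck by simp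
  then have "c * \<kappa> * (\<kappa>\<^sup>2 + \<alpha>t * b) \<le> \<kappa>\<^sup>2 * m" using dpos
    by (simp add: qt_def field_simps)
  then have "\<kappa> * (c * \<kappa>\<^sup>2 + c * \<alpha>t * b) \<le> \<kappa> * (\<kappa> * m)"
    by (simp add: power2_eq_square algebra_simps)
  then have H: "c * \<kappa>\<^sup>2 + c * \<alpha>t * b \<le> \<kappa> * m" using k by simp
  have bck: "b * c * \<alpha> / \<kappa> = \<alpha> * (b * c / \<kappa>)" by simp
  have claim: "\<bar>wt\<bar> \<le> m"
  proof (cases "x \<ge> 0")
    case True
    have y: "0 \<le> y" "y \<le> x" using pos_bound[OF nl a k True] y_def by auto
    have s0: "s \<ge> 0" using y a by (simp add: s_def)
    have "\<alpha> * s \<le> \<alpha> * (b * c / \<kappa>)" using xys y hx True bck by simp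
    then have sb: "s \<le> b * c / \<kappa>" using mult_le_cancel_left_pos[OF a] by blast
    have wt0: "wt \<ge> 0" using y s0 at by (simp add: wt_def)
    define st where "st = (m - c * \<kappa>) / \<alpha>t"
    have mst: "m = c * \<kappa> + \<alpha>t * st" using at by (simp add: st_def)
    have "\<alpha>t * (b * c / \<kappa>) \<le> \<alpha>t * st"
    proof -
      have "\<alpha>t * (b * c / \<kappa>) = (c * \<alpha>t * b) / \<kappa>" by simp
      also have "\<dots> \<le> (\<kappa> * m - c * \<kappa>\<^sup>2) / \<kappa>" using H k by (intro divide_right_mono) auto
      also have "\<dots> = m - c * \<kappa>" using k by (simp add: power2_eq_square field_simps)
      also have "\<dots> = \<alpha>t * st" using mst by simp
      finally show ?thesis .
    qed
    then have stb: "b * c / \<kappa> \<le> st" using mult_le_cancel_left_pos[OF at] by blast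
    show ?thesis
    proof (rule ccontr)
      assume "\<not> \<bar>wt\<bar> \<le> m"
      then have "wt > m" using wt0 by simp
      then have gt: "y + \<alpha>t * s > c * \<kappa> + \<alpha>t * st" using mst wt_def by simp
      have "\<alpha>t * s \<le> \<alpha>t * st" using sb stb at by simp
      then have ylt: "c * \<kappa> < y" using gt by simp
      have "st \<le> s"
        by (rule S_mono[OF nl A1 k at _ _ ylt]) (use pm mst pwt wt_def in auto)
      then have "s = b * c / \<kappa>" using sb stb by simp
      then have "x = y + \<alpha> * (b * c / \<kappa>)" using xys by simp
      then have "x > b * c * \<alpha> / \<kappa>" unfolding bck using ylt ck by linarith
      then show False using hx True by simp
    qed
  next
    case False
    have y: "y \<le> 0" "x \<le> y" using neg_bound[OF nl a k] False y_def by auto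
    have s0: "s \<le> 0" using y a by (simp add: s_def divide_nonpos_pos)
    have "\<alpha> * (- s) \<le> \<alpha> * (b * c / \<kappa>)" using xys y hx False bck by simp
    then have "- s \<le> b * c / \<kappa>" using mult_le_cancel_left_pos[OF a] by blast
    then have sb: "- (b * c / \<kappa>) \<le> s" by linarith
    have "\<alpha>t * s \<le> 0" using s0 at by (simp add: mult_nonneg_nonpos)
    then have wt0: "wt \<le> 0" using y by (simp add: wt_def)
    define yp where "yp = phi \<alpha>t \<kappa> (- m)"
    define sp where "sp = (- m - yp) / \<alpha>t"
    have msp: "- m = yp + \<alpha>t * sp" using at by (simp add: sp_def)
    have ypb: "\<bar>yp\<bar> \<le> qt * m" using A2'[of "- m"] m0 yp_def by simp
    have ypn: "yp \<le> 0" using neg_bound[OF nl at k, of "- m"] m0 yp_def by simp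
    have qm: "m - qt * m = m * \<alpha>t * b / (\<kappa>\<^sup>2 + \<alpha>t * b)"
      using dpos by (simp add: qt_def field_simps)
    have "\<alpha>t * b * (c * \<kappa>\<^sup>2 + c * \<alpha>t * b) \<le> \<alpha>t * b * (\<kappa> * m)"
      using H at b by (intro mult_left_mono) auto
    then have "\<alpha>t * b * c * (\<kappa>\<^sup>2 + \<alpha>t * b) \<le> (m * \<alpha>t * b) * \<kappa>"
      by (simp add: algebra_simps)
    then have "\<alpha>t * (b * c / \<kappa>) \<le> m * \<alpha>t * b / (\<kappa>\<^sup>2 + \<alpha>t * b)"
      using dpos k by (simp add: field_simps)
    then have "\<alpha>t * (b * c / \<kappa>) \<le> m - qt * m" using qm by simp
    also have "\<dots> \<le> m + yp" using ypb ypn by simp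
    also have "\<dots> = \<alpha>t * (- sp)" using msp by simp
    finally have "b * c / \<kappa> \<le> - sp" using mult_le_cancel_left_pos[OF at] by blast
    then have spb: "sp \<le> - (b * c / \<kappa>)" by linarith
    show ?thesis
    proof (rule ccontr)
      assume "\<not> \<bar>wt\<bar> \<le> m"
      then have "wt < - m" using wt0 by simp
      then have lt: "y + \<alpha>t * s < yp + \<alpha>t * sp" using msp wt_def by simp
      have "\<alpha>t * sp \<le> \<alpha>t * s" using sb spb at by simp
      then have ylt: "y < yp" using lt by simp
      have "s \<le> sp"
        by (rule S_mono[OF nl A1 k at _ _ ylt]) (use pwt wt_def yp_def msp in auto)
      then have "s = - (b * c / \<kappa>)" using sb spb by simp
      then have "x = y - \<alpha> * (b * c / \<kappa>)" using xys by simp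
      then have "x < - (b * c * \<alpha> / \<kappa>)" unfolding bck using ylt ypn by linarith
      then show False using hx False by simp
    qed
  qed
  have yb: "\<bar>y\<bar> \<le> qt * \<bar>wt\<bar>" using A2'[OF claim] pwt by simp
  have signs: "\<bar>wt\<bar> = \<bar>y\<bar> + \<alpha>t * \<bar>s\<bar> \<and> \<bar>x\<bar> = \<bar>y\<bar> + \<alpha> * \<bar>s\<bar>"
  proof (cases "x \<ge> 0")
    case True
    have y: "0 \<le> y" "y \<le> x" using pos_bound[OF nl a k True] y_def by auto
    have s0: "s \<ge> 0" using y a by (simp add: s_def)
    show ?thesis using y s0 at a xys by (simp add: wt_def)
  next
    case False
    have y: "y \<le> 0" "x \<le> y" using neg_bound[OF nl a k] False y_def by auto
    have s0: "s \<le> 0" using y a by (simp add: s_def divide_nonpos_pos)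
    have "\<alpha>t * s \<le> 0" "\<alpha> * s \<le> 0" using s0 at a by (simp_all add: mult_nonneg_nonpos)
    then show ?thesis using y s0 xys by (simp add: wt_def)
  qed
  have "\<bar>y\<bar> \<le> 1 / (2 * sqrt b) * \<kappa> / sqrt \<alpha> * (\<bar>y\<bar> + \<alpha> * \<bar>s\<bar>)"
    by (rule alg[OF k a at b]) (use yb signs qt_def in auto)
  then show "\<bar>phi \<alpha> \<kappa> x\<bar> \<le> 1 / (2 * sqrt b) * \<kappa> / sqrt \<alpha> * \<bar>x\<bar>"
    using signs y_def by simp
qed

theorem lemma4p5:
  fixes phi :: "real \<Rightarrow> real \<Rightarrow> real \<Rightarrow> real" and \<alpha>t b c :: real
  assumes "nl_reg_filter phi"
    and "assumption_A1 phi"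
    and "\<alpha>t > 0" and "b > 0" and "c > 0"
    and "assumption_A2 phi \<alpha>t b c"
  shows "assumption_B1 phi \<and> assumption_B2 phi (b * c) (1 / (2 * sqrt b))"
  using B1[OF assms(1,2)] B2[OF assms] by simp

end
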